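(* Let $G'=(V',E',m')$ and $G=(V,E,m)$ be finite weighted graphs such that $G'$ is a weak cover of $G$. Then $h_G\ge h_{G'}$.
   Context: For a finite graph $G=(V,E)$ with positive edge weights $m$, set $m(v)=\sum_{e\ni v}m(e)$, $m(U)=\sum_{v\in U}m(v)$, $m(U_1,U_2)=\sum_{(u_1,u_2)\in U_1\times U_2,\ \{u_1,u_2\}\in E}m(\{u_1,u_2\})$, and $h_G=\min_{\emptyset\neq U\subsetneq V}\frac{m(U,V\setminus U)\,m(V)}{m(U)\,m(V\setminus U)}$. $G'$ is a weak cover of $G$ if there is a surjective map $p:V'\to V$ such that for every $\{v',u'\}\in E'$, $\{p(v'),p(u')\}\in E$, the induced map $p:E'\to E$ is surjective, and for every $e\in E$, $m(e)=\sum_{e'\in p^{-1}(e)}m'(e')$. *)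

theory Defs
  imports Complex_Main
begin

definition wgraph :: "'a set \<Rightarrow> 'a set set \<Rightarrow> ('a set \<Rightarrow> real) \<Rightarrow> bool" where
  "wgraph V E m \<longleftrightarrow> finite V \<and> (\<forall>e\<in>E. e \<subseteq> V \<and> card e = 2) \<and> (\<forall>e\<in>E. 0 < m e)"

definition vdeg :: "'a set set \<Rightarrow> ('a set \<Rightarrow> real) \<Rightarrow> 'a \<Rightarrow> real" where
  "vdeg E m v = (\<Sum>e\<in>{e\<in>E. v \<in> e}. m e)"

definition vol :: "'a set set \<Rightarrow> ('a set \<Rightarrow> real) \<Rightarrow> 'a set \<Rightarrow> real" where
  "vol E m U = (\<Sum>v\<in>U. vdeg E m v)"

definition cut :: "'a set set \<Rightarrow> ('a set \<Rightarrow> real) \<Rightarrow> 'a set \<Rightarrow> 'a set \<Rightarrow> real" where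
  "cut E m U1 U2 = (\<Sum>(u1,u2)\<in>U1 \<times> U2. if {u1,u2} \<in> E then m {u1,u2} else 0)"

definition cheeger :: "'a set \<Rightarrow> 'a set set \<Rightarrow> ('a set \<Rightarrow> real) \<Rightarrow> real" where
  "cheeger V E m = Min {cut E m U (V - U) * vol E m V / (vol E m U * vol E m (V - U)) | U. U \<noteq> {} \<and> U \<subset> V}"

definition weak_cover ::
  "'a set \<Rightarrow> 'a set set \<Rightarrow> ('a set \<Rightarrow> real) \<Rightarrow> 'b set \<Rightarrow> 'b set set \<Rightarrow> ('b set \<Rightarrow> real) \<Rightarrow> ('a \<Rightarrow> 'b) \<Rightarrow> bool" where
  "weak_cover V' E' m' V E m p \<longleftrightarrow>
     p ` V' = V \<and>
     (\<forall>v'\<in>V'. \<forall>u'\<in>V'. {v', u'} \<in> E' \<longrightarrow> {p v', p u'} \<in> E) \<and>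
     (\<lambda>e'. p ` e') ` E' = E \<and>
     (\<forall>e\<in>E. m e = (\<Sum>e'\<in>{e'\<in>E'. p ` e' = e}. m' e'))"

end

theory Submission
  imports Defs
begin

lemma vol_edges:
  assumes "finite U" "finite E"
  shows "vol E m U = (\<Sum>e\<in>E. m e * real (card {v. v \<in> U \<and> v \<in> e}))"
proof -
  have "vol E m U = (\<Sum>v\<in>U. \<Sum>e\<in>{e. e \<in> E \<and> v \<in> e}. m e)"
    unfolding vol_def vdeg_def by simp
  also have "\<dots> = (\<Sum>e\<in>E. \<Sum>v\<in>{v. v \<in> U \<and> v \<in> e}. m e)"
    by (rule sum.swap_restrict[OF assms])
  also have "\<dots> = (\<Sum>e\<in>E. m e * real (card {v. v \<in> U \<and> v \<in> e}))"
    by (simp add: mult.commute)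
  finally show ?thesis .
qed

lemma cut_edges:
  assumes "finite U" "finite W" "finite E"
  shows "cut E m U W = (\<Sum>e\<in>E. m e * real (card {x. x \<in> U \<times> W \<and> {fst x, snd x} = e}))"
proof -
  have fin: "finite (U \<times> W)" using assms by auto
  have "cut E m U W = (\<Sum>x\<in>U \<times> W. \<Sum>e\<in>{e. e \<in> E \<and> {fst x, snd x} = e}. m e)"
    unfolding cut_def
  proof (rule sum.cong[OF refl])
    fix x assume "x \<in> U \<times> W"
    show "(case x of (u1, u2) \<Rightarrow> if {u1, u2} \<in> E then m {u1, u2} else 0) =
      (\<Sum>e\<in>{e. e \<in> E \<and> {fst x, snd x} = e}. m e)"
    proof (cases "{fst x, snd x} \<in> E")
      case True
      then have "{e. e \<in> E \<and> {fst x, snd x} = e} = {{fst x, snd x}}" by auto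
      then show ?thesis using True by (simp add: case_prod_beta)
    next
      case False
      then have eq: "{e. e \<in> E \<and> {fst x, snd x} = e} = {}" by auto
      have "(\<Sum>e\<in>{e. e \<in> E \<and> {fst x, snd x} = e}. m e) = 0" unfolding eq by simp
      then show ?thesis using False by (simp add: case_prod_beta)
    qed
  qed
  also have "\<dots> = (\<Sum>e\<in>E. \<Sum>x\<in>{x. x \<in> U \<times> W \<and> {fst x, snd x} = e}. m e)"
    by (rule sum.swap_restrict[OF fin assms(3)])
  also have "\<dots> = (\<Sum>e\<in>E. m e * real (card {x. x \<in> U \<times> W \<and> {fst x, snd x} = e}))"
    by (simp add: mult.commute)
  finally show ?thesis .
qed

lemma fiber_sum:
  fixes m :: "'b set \<Rightarrow> real" and m' :: "'a set \<Rightarrow> real" and c :: "'b set \<Rightarrow> real"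
  assumes "finite E'" "(\<lambda>e'. p ` e') ` E' = E"
    "\<forall>e\<in>E. m e = (\<Sum>e'\<in>{e'\<in>E'. p ` e' = e}. m' e')"
  shows "(\<Sum>e\<in>E. m e * c e) = (\<Sum>e'\<in>E'. m' e' * c (p ` e'))"
proof -
  have "(\<Sum>e'\<in>E'. m' e' * c (p ` e')) =
      (\<Sum>e\<in>(\<lambda>e'. p ` e') ` E'. \<Sum>e'\<in>{x. x \<in> E' \<and> p ` x = e}. m' e' * c (p ` e'))"
    by (rule sum.image_gen[OF assms(1)])
  also have "\<dots> = (\<Sum>e\<in>E. \<Sum>e'\<in>{x. x \<in> E' \<and> p ` x = e}. m' e' * c e)"
    using assms(2) by (auto intro!: sum.cong)
  also have "\<dots> = (\<Sum>e\<in>E. (\<Sum>e'\<in>{x. x \<in> E' \<and> p ` x = e}. m' e') * c e)"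
    by (rule sum.cong[OF refl]) (rule sum_distrib_right[symmetric])
  also have "\<dots> = (\<Sum>e\<in>E. m e * c e)"
    using assms(3) by simp
  finally show ?thesis by simp
qed

lemma count_vol:
  assumes "a \<noteq> b"
  shows "card {v. v \<in> U \<and> v \<in> {a, b}} = (if a \<in> U then 1 else 0) + (if b \<in> U then 1 else 0)"
proof -
  have "{v. v \<in> U \<and> v \<in> {a, b}} = (if a \<in> U then {a} else {}) \<union> (if b \<in> U then {b} else {})"
    by auto
  then show ?thesis using assms by auto
qed

lemma count_cut:
  assumes "a \<noteq> b" "a \<in> V" "b \<in> V"
  shows "card {x. x \<in> U \<times> (V - U) \<and> {fst x, snd x} = {a, b}} =
    (if (a \<in> U) = (b \<in> U) then 0 else 1)"
proof -
  have "{x. x \<in> U \<times> (V - U) \<and> {fst x, snd x} = {a, b}} =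
     (if a \<in> U \<and> b \<notin> U then {(a, b)} else if b \<in> U \<and> a \<notin> U then {(b, a)} else {})"
    using assms by (auto simp: doubleton_eq_iff)
  then show ?thesis by auto
qed

theorem proposition4p7:
  fixes V' :: "'a set" and E' :: "'a set set" and m' :: "'a set \<Rightarrow> real"
    and V :: "'b set" and E :: "'b set set" and m :: "'b set \<Rightarrow> real"
    and p :: "'a \<Rightarrow> 'b"
  assumes "wgraph V' E' m'" and "wgraph V E m"
    and "2 \<le> card V"
    and "weak_cover V' E' m' V E m p"
  shows "cheeger V E m \<ge> cheeger V' E' m'"
proof -
  have finV': "finite V'" and E'V: "\<forall>e\<in>E'. e \<subseteq> V' \<and> card e = 2"
    using assms(1) unfolding wgraph_def by auto
  have finV: "finite V" and EV: "\<forall>e\<in>E. e \<subseteq> V \<and> card e = 2"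
    using assms(2) unfolding wgraph_def by auto
  have pV: "p ` V' = V" and pE: "(\<lambda>e'. p ` e') ` E' = E"
    and pm: "\<forall>e\<in>E. m e = (\<Sum>e'\<in>{e'\<in>E'. p ` e' = e}. m' e')"
    using assms(4) unfolding weak_cover_def by auto
  have finE': "finite E'" 
    by (rule finite_subset[of _ "Pow V'"]) (use E'V finV' in auto)
  have finE: "finite E" 
    by (rule finite_subset[of _ "Pow V"]) (use EV finV in auto)
  have edge': "\<exists>a b. e' = {a, b} \<and> a \<noteq> b \<and> a \<in> V' \<and> b \<in> V' \<and> p a \<noteq> p b
      \<and> p a \<in> V \<and> p b \<in> V" if "e' \<in> E'" for e'
  proof -
    have c2: "card e' = 2" using E'V that by blast
    obtain a b where ab: "e' = {a, b}" "a \<noteq> b" using c2 card_2_iff by metis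
    have "p ` e' \<in> E" using pE that by blast
    then have cp: "card (p ` e') = 2" using EV by blast
    have pab: "p a \<noteq> p b"
    proof
      assume "p a = p b"
      then have "p ` e' = {p a}" using ab by simp
      then show False using cp by simp
    qed
    have inV': "a \<in> V'" "b \<in> V'" using ab E'V that by blast+
    have "p a \<in> V" "p b \<in> V" using inV' pV by blast+
    then show ?thesis using ab pab inV' by blast
  qed
  define pre where "pre U = {x. x \<in> V' \<and> p x \<in> U}" for U
  have vol_eq: "vol E' m' (pre U) = vol E m U" if "U \<subseteq> V" for U
  proof -
    have fU: "finite U" using that finV finite_subset by auto
    have fP: "finite (pre U)" using finV' unfolding pre_def by auto
    have "vol E m U = (\<Sum>e\<in>E. m e * real (card {v. v \<in> U \<and> v \<in> e}))"
      by (rule vol_edges[OF fU finE])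
    also have "\<dots> = (\<Sum>e'\<in>E'. m' e' * real (card {v. v \<in> U \<and> v \<in> p ` e'}))"
      by (rule fiber_sum[OF finE' pE pm])
    also have "\<dots> = (\<Sum>e'\<in>E'. m' e' * real (card {v. v \<in> pre U \<and> v \<in> e'}))"
    proof (rule sum.cong[OF refl])
      fix e' assume "e' \<in> E'"
      then obtain a b where ab: "e' = {a, b}" "a \<noteq> b" "a \<in> V'" "b \<in> V'" "p a \<noteq> p b"
        using edge' by blast
      have "card {v. v \<in> U \<and> v \<in> p ` e'} = card {v. v \<in> pre U \<and> v \<in> e'}"
        using count_vol[OF ab(2), of "pre U"] count_vol[OF ab(5), of U] ab
        unfolding pre_def by simp
      then show "m' e' * real (card {v. v \<in> U \<and> v \<in> p ` e'}) =
          m' e' * real (card {v. v \<in> pre U \<and> v \<in> e'})" by simp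
    qed
    also have "\<dots> = vol E' m' (pre U)"
      by (rule vol_edges[OF fP finE', symmetric])
    finally show ?thesis by simp
  qed
  have cut_eq: "cut E' m' (pre U) (V' - pre U) = cut E m U (V - U)" if "U \<subseteq> V" for U
  proof -
    have fU: "finite U" using that finV finite_subset by auto
    have fP: "finite (pre U)" using finV' unfolding pre_def by auto
    have "cut E m U (V - U) = (\<Sum>e\<in>E. m e * real (card {x. x \<in> U \<times> (V - U) \<and> {fst x, snd x} = e}))"
      by (rule cut_edges[OF fU _ finE]) (use finV in auto)
    also have "\<dots> = (\<Sum>e'\<in>E'. m' e' * real (card {x. x \<in> U \<times> (V - U) \<and> {fst x, snd x} = p ` e'}))"
      by (rule fiber_sum[OF finE' pE pm])
    also have "\<dots> = (\<Sum>e'\<in>E'. m' e' * real (card {x. x \<in> pre U \<times> (V' - pre U) \<and> {fst x, snd x} = e'}))"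
    proof (rule sum.cong[OF refl])
      fix e' assume "e' \<in> E'"
      then obtain a b where ab: "e' = {a, b}" "a \<noteq> b" "a \<in> V'" "b \<in> V'" "p a \<noteq> p b"
        "p a \<in> V" "p b \<in> V"
        using edge' by blast
      have "card {x. x \<in> U \<times> (V - U) \<and> {fst x, snd x} = p ` e'} =
          card {x. x \<in> pre U \<times> (V' - pre U) \<and> {fst x, snd x} = e'}"
        using count_cut[OF ab(2) ab(3) ab(4), of "pre U"] count_cut[OF ab(5) ab(6) ab(7), of U] ab
        unfolding pre_def by simp
      then show "m' e' * real (card {x. x \<in> U \<times> (V - U) \<and> {fst x, snd x} = p ` e'}) =
          m' e' * real (card {x. x \<in> pre U \<times> (V' - pre U) \<and> {fst x, snd x} = e'})" by simp
    qed
    also have "\<dots> = cut E' m' (pre U) (V' - pre U)"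
      by (rule cut_edges[OF fP _ finE', symmetric]) (use finV' in auto)
    finally show ?thesis by simp
  qed
  define r where "r U = cut E m U (V - U) * vol E m V / (vol E m U * vol E m (V - U))" for U
  define r' where "r' U = cut E' m' U (V' - U) * vol E' m' V' / (vol E' m' U * vol E' m' (V' - U))" for U
  define S where "S = {r U | U. U \<noteq> {} \<and> U \<subset> V}"
  define S' where "S' = {r' U | U. U \<noteq> {} \<and> U \<subset> V'}"
  have finS: "finite S"
  proof -
    have "S \<subseteq> r ` Pow V" unfolding S_def by auto
    then show ?thesis by (rule finite_subset) (use finV in auto)
  qed
  have finS': "finite S'"
  proof -
    have "S' \<subseteq> r' ` Pow V'" unfolding S'_def by auto
    then show ?thesis by (rule finite_subset) (use finV' in auto)
  qed
  have "S \<noteq> {}"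
  proof -
    obtain v where v: "v \<in> V" using assms(3) by fastforce
    have "{v} \<noteq> V" using assms(3) by auto
    then have "{v} \<subset> V" using v by auto
    then show ?thesis unfolding S_def by blast
  qed
  then have "Min S \<in> S" by (rule Min_in[OF finS])
  then obtain U where U: "Min S = r U" "U \<noteq> {}" "U \<subset> V" unfolding S_def by blast
  have UV: "U \<subseteq> V" using U by auto
  have ne: "pre U \<noteq> {}" using U(2) UV pV unfolding pre_def by blast
  have ps: "pre U \<subset> V'"
  proof -
    obtain w where "w \<in> V" "w \<notin> U" using U(3) by blast
    then obtain w' where "w' \<in> V'" "p w' = w" using pV by blast
    then show ?thesis using \<open>w \<notin> U\<close> unfolding pre_def by blast
  qed
  have c1: "V' - pre U = pre (V - U)" unfolding pre_def using pV by auto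
  have c2: "V' = pre V" unfolding pre_def using pV by auto
  have "r' (pre U) = r U"
  proof -
    have e1: "vol E' m' (pre U) = vol E m U" using vol_eq[OF UV] .
    have e2: "vol E' m' (V' - pre U) = vol E m (V - U)" unfolding c1 by (rule vol_eq) auto
    have e3: "vol E' m' V' = vol E m V" unfolding c2 by (rule vol_eq) auto
    show ?thesis unfolding r'_def r_def e1 e2 e3 cut_eq[OF UV] ..
  qed
  moreover have "r' (pre U) \<in> S'" unfolding S'_def using ne ps by blast
  ultimately have "Min S' \<le> Min S" using Min_le[OF finS'] U(1) by metis
  then show ?thesis unfolding cheeger_def S_def S'_def r_def r'_def by simp
qed

end
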